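(* Consider the ODE system $$\frac{du}{dt}=a_1u-b_1u^2-c_1uv,\qquad \frac{dv}{dt}=\frac{a_2v}{1+ku}-b_2v^2-c_2uv,$$ with positive parameters $a_2,b_1,b_2,c_1,c_2$, $k\ge0$, and regard $a_1>0$ as the bifurcation parameter. Let $E_3=(0,\frac{a_2}{b_2})$. If $c_1\neq\frac{b_1b_2}{ka_2+c_2}$, then the system undergoes a transcritical bifurcation around $E_3$ at $$a_1=a_1^*=\frac{c_1a_2}{b_2}.$$ *)

theory Defs
  imports "HOL-Analysis.Analysis"
begin

definition model_field ::
  "real \<Rightarrow> real \<Rightarrow> real \<Rightarrow> real \<Rightarrow> real \<Rightarrow> real \<Rightarrow> real \<Rightarrow> real^2 \<Rightarrow> real^2" where
  "model_field b1 c1 a2 b2 c2 k a1 x =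
     (\<chi> i. if i = 1
            then a1 * x$1 - b1 * (x$1)^2 - c1 * x$1 * x$2
            else a2 * x$2 / (1 + k * x$1) - b2 * (x$2)^2 - c2 * x$1 * x$2)"

definition E3 :: "real \<Rightarrow> real \<Rightarrow> real^2" where
  "E3 a2 b2 = (\<chi> i. if i = 1 then 0 else a2 / b2)"

definition is_eigenvalue :: "real^'n^'n \<Rightarrow> complex \<Rightarrow> bool" where
  "is_eigenvalue J l \<longleftrightarrow> det (mat l - (\<chi> i j. complex_of_real (J$i$j))) = 0"

definition lin_stable :: "(real \<Rightarrow> real^'n \<Rightarrow> real^'n) \<Rightarrow> real \<Rightarrow> real^'n \<Rightarrow> bool" where
  "lin_stable F mu x \<longleftrightarrow>
     (\<exists>J. (F mu has_derivative (\<lambda>h. J *v h)) (at x) \<and>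
          (\<forall>l. is_eigenvalue J l \<longrightarrow> Re l < 0))"

definition lin_unstable :: "(real \<Rightarrow> real^'n \<Rightarrow> real^'n) \<Rightarrow> real \<Rightarrow> real^'n \<Rightarrow> bool" where
  "lin_unstable F mu x \<longleftrightarrow>
     (\<exists>J. (F mu has_derivative (\<lambda>h. J *v h)) (at x) \<and>
          (\<exists>l. is_eigenvalue J l \<and> Re l > 0))"

definition transcritical_bifurcation ::
  "(real \<Rightarrow> real^'n \<Rightarrow> real^'n) \<Rightarrow> real^'n \<Rightarrow> real \<Rightarrow> bool" where
  "transcritical_bifurcation F x0 mu0 \<longleftrightarrow>
     (\<exists>\<delta>>0. \<exists>U. open U \<and> x0 \<in> U \<and>
       (\<exists>\<beta> \<gamma> :: real \<Rightarrow> real^'n. \<exists>d\<beta> d\<gamma>.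
          \<beta> mu0 = x0 \<and> \<gamma> mu0 = x0 \<and>
          continuous_on {mu0 - \<delta> <..< mu0 + \<delta>} \<beta> \<and>
          continuous_on {mu0 - \<delta> <..< mu0 + \<delta>} \<gamma> \<and>
          (\<beta> has_vector_derivative d\<beta>) (at mu0) \<and>
          (\<gamma> has_vector_derivative d\<gamma>) (at mu0) \<and> d\<beta> \<noteq> d\<gamma> \<and>
          (\<forall>mu \<in> {mu0 - \<delta> <..< mu0 + \<delta>}. \<forall>x \<in> U.
              F mu x = 0 \<longleftrightarrow> x = \<beta> mu \<or> x = \<gamma> mu) \<and>
          (\<forall>mu \<in> {mu0 - \<delta> <..< mu0 + \<delta>}. mu \<noteq> mu0 \<longrightarrow>
              \<beta> mu \<noteq> \<gamma> mu \<and> \<beta> mu \<in> U \<and> \<gamma> mu \<in> U) \<and>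
          (\<forall>mu \<in> {mu0 - \<delta> <..< mu0}.
              lin_stable F mu (\<beta> mu) \<and> lin_unstable F mu (\<gamma> mu)) \<and>
          (\<forall>mu \<in> {mu0 <..< mu0 + \<delta>}.
              lin_unstable F mu (\<beta> mu) \<and> lin_stable F mu (\<gamma> mu))))"

end

theory Submission
  imports Defs
begin


lemma field_decomp: "model_field b1 c1 a2 b2 c2 k a1 = (\<lambda>x.
   (a1 * x$1 - b1 * (x$1)^2 - c1 * x$1 * x$2) *\<^sub>R axis 1 1 +
   (a2 * x$2 / (1 + k * x$1) - b2 * (x$2)^2 - c2 * x$1 * x$2) *\<^sub>R axis 2 1)"
  by (auto simp: fun_eq_iff vec_eq_iff forall_2 model_field_def axis_def)

definition Jac :: "real \<Rightarrow> real \<Rightarrow> real \<Rightarrow> real \<Rightarrow> real \<Rightarrow> real \<Rightarrow> real \<Rightarrow> real \<Rightarrow> real \<Rightarrow> real^2^2" where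
 "Jac b1 c1 a2 b2 c2 k a1 u v = vector [vector [a1 - 2 * b1 * u - c1 * v, - c1 * u],
     vector [- (a2 * k * v / (1 + k * u)^2) - c2 * v, a2 / (1 + k * u) - 2 * b2 * v - c2 * u]]"

lemma field_deriv:
  fixes x :: "real^2"
  assumes "1 + k * x$1 \<noteq> 0"
  shows "(model_field b1 c1 a2 b2 c2 k a1 has_derivative (\<lambda>h. Jac b1 c1 a2 b2 c2 k a1 (x$1) (x$2) *v h)) (at x)"
proof -
  have d1: "((\<lambda>x::real^2. x$i) has_derivative (\<lambda>h. h$i)) (at x)" for i
    by (rule bounded_linear_imp_has_derivative) (rule bounded_linear_vec_nth)
  show ?thesis
    unfolding field_decomp
    apply (rule has_derivative_eq_rhs)
     apply (rule derivative_eq_intros d1 refl)+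
    using assms apply simp
    apply (rule derivative_eq_intros d1 refl)+
    using assms apply (simp add: fun_eq_iff vec_eq_iff forall_2 Jac_def matrix_vector_mult_def sum_2 axis_def)
    apply (simp add: field_simps power2_eq_square)
    done
qed


lemma eig2: "is_eigenvalue (J::real^2^2) l \<longleftrightarrow>
   (l - of_real (J$1$1)) * (l - of_real (J$2$2)) - of_real (J$1$2) * of_real (J$2$1) = 0"
  unfolding is_eigenvalue_def det_2 by (simp add: mat_def)

lemma quad_stable:
  fixes l :: complex and p q :: real
  assumes "l * l - of_real p * l + of_real q = 0" "p < 0" "q > 0"
  shows "Re l < 0"
proof -
  obtain x y where l: "l = Complex x y" by (cases l)
  have re: "x * x - y * y - p * x + q = 0" and im: "2 * x * y - p * y = 0"
    using assms(1) unfolding l complex_eq_iff by (auto simp: algebra_simps)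
  have "y * (2 * x - p) = 0" using im by (simp add: algebra_simps)
  then have "y = 0 \<or> 2 * x = p" by simp
  then show ?thesis
  proof
    assume "y = 0"
    then have e: "x * x - p * x + q = 0" using re by simp
    show ?thesis
    proof (rule ccontr)
      assume "\<not> Re l < 0"
      then have x: "x \<ge> 0" unfolding l by simp
      have "p * x \<le> 0" using x assms(2) by (simp add: mult_nonpos_nonneg)
      moreover have "x * x \<ge> 0" by simp
      ultimately show False using e assms(3) by linarith
    qed
  next
    assume "2 * x = p" then show ?thesis unfolding l using assms(2) by simp
  qed
qed

lemma stable2:
  fixes J :: "real^2^2"
  assumes "J$1$1 + J$2$2 < 0" "J$1$1 * J$2$2 - J$1$2 * J$2$1 > 0"
  shows "\<forall>l. is_eigenvalue J l \<longrightarrow> Re l < 0"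
proof (intro allI impI)
  fix l assume "is_eigenvalue J l"
  then have "l * l - of_real (J$1$1 + J$2$2) * l + of_real (J$1$1 * J$2$2 - J$1$2 * J$2$1) = 0"
    unfolding eig2 by (simp add: algebra_simps)
  then show "Re l < 0" using quad_stable assms by blast
qed

lemma unstable_det:
  fixes J :: "real^2^2"
  assumes "J$1$1 * J$2$2 - J$1$2 * J$2$1 < 0"
  shows "\<exists>l. is_eigenvalue J l \<and> Re l > 0"
proof -
  define p where "p = J$1$1 + J$2$2"
  define q where "q = J$1$1 * J$2$2 - J$1$2 * J$2$1"
  define x where "x = (p + sqrt (p^2 - 4 * q)) / 2"
  have q: "q < 0" using assms q_def by simp
  have "sqrt (p^2) < sqrt (p^2 - 4*q)" using q by (intro real_sqrt_less_mono) simp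
  then have s: "sqrt (p^2 - 4*q) > \<bar>p\<bar>" by simp
  have ss: "(sqrt (p^2 - 4*q))^2 = p^2 - 4*q" using q by (simp add: add_nonneg_pos, smt (verit) zero_le_power2)
  have x0: "x > 0" proof -
    have "p + sqrt (p^2 - 4 * q) > 0" using s by (simp add: abs_if split: if_splits)
    then show ?thesis unfolding x_def by simp
  qed
  have "x * x - p * x + q = 0" unfolding x_def using ss by (simp add: field_simps power2_eq_square)
  then have "(x - J$1$1) * (x - J$2$2) - J$1$2 * J$2$1 = 0" unfolding p_def q_def by (simp add: algebra_simps)
  then have "complex_of_real ((x - J$1$1) * (x - J$2$2) - J$1$2 * J$2$1) = 0" by simp
  then have "is_eigenvalue J (of_real x)" unfolding eig2 by simp
  then show ?thesis using x0 by auto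
qed

lemma unstable_tri:
  fixes J :: "real^2^2"
  assumes "J$1$2 = 0" "J$1$1 > 0"
  shows "\<exists>l. is_eigenvalue J l \<and> Re l > 0"
  using assms by (intro exI[of _ "of_real (J$1$1)"]) (simp add: eig2)


lemma sign_lem:
  fixes D B0 c t q :: real
  assumes "B0 = D - c" "q > 0" "\<bar>q - 1\<bar> \<le> 3*t" "3*t*\<bar>D\<bar> < \<bar>B0\<bar>"
  shows "(D - c/q) * B0 > 0"
proof -
  have e: "D - c/q = (B0 + D*(q-1))/q" using assms(1,2) by (simp add: field_simps)
  have "\<bar>B0 * D * (q-1)\<bar> = \<bar>B0\<bar> * (\<bar>D\<bar> * \<bar>q-1\<bar>)" by (simp add: abs_mult)
  also have "\<dots> \<le> \<bar>B0\<bar> * (\<bar>D\<bar> * (3*t))" by (intro mult_left_mono assms(3)) auto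
  also have "\<dots> < \<bar>B0\<bar> * \<bar>B0\<bar>"
  proof -
    have t0: "t \<ge> 0" using assms(3) by (smt (verit) abs_ge_zero)
    have "3*t*\<bar>D\<bar> \<ge> 0" using t0 by simp
    then have "\<bar>B0\<bar> > 0" using assms(4) by linarith
    then show ?thesis using assms(4) by (intro mult_strict_left_mono) (auto simp: algebra_simps)
  qed
  finally have lt: "\<bar>B0 * D * (q-1)\<bar> < \<bar>B0\<bar> * \<bar>B0\<bar>" .
  have "\<bar>B0\<bar> * \<bar>B0\<bar> = B0 * B0" by (rule abs_mult_self_eq)
  moreover have "- \<bar>B0 * D * (q-1)\<bar> \<le> B0 * D * (q-1)" by linarith
  ultimately have "B0 * B0 + B0 * D * (q-1) > 0" using lt by linarith
  then have "B0 * (B0 + D*(q-1)) > 0" by (simp add: algebra_simps)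
  then show ?thesis unfolding e using assms(2) by (simp add: field_simps mult.commute)
qed

lemma root_lem:
  fixes A B C R sg u :: real
  assumes "sg * sg = 1" "R*R = B*B + 4*A*C" "u * (B + sg * R) = 2*C" "B + sg * R \<noteq> 0"
  shows "A*u*u + B*u - C = 0"
proof -
  have "sg * R*u = 2*C - B*u" using assms(3) by (simp add: algebra_simps)
  then have "(sg * R*u)*(sg * R*u) = (2*C - B*u)*(2*C - B*u)" by simp
  moreover have "(sg * R*u)*(sg * R*u) = (B*B + 4*A*C)*u*u" using assms(1,2)
    by (metis (no_types, lifting) mult.assoc mult.commute mult.left_neutral)
  ultimately have "4*C*(C - B*u - A*u*u) = 0" by (simp add: algebra_simps)
  then have "C = 0 \<or> C - B*u - A*u*u = 0" by simp
  then show ?thesis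
  proof
    assume "C = 0" then have "u = 0" using assms(3,4) by simp
    then show ?thesis using \<open>C = 0\<close> by simp
  qed simp
qed

lemma lin_aux: fixes X1 X2 Y D w1 w2 :: real
  shows "X1 - X2 = -(w1-w2)*Y \<Longrightarrow> (D*w1 + X1) - (D*w2 + X2) = (w1-w2)*(D - Y)"
  by (simp add: algebra_simps)

lemma neg_aux: "(x::real) * y < 0 \<Longrightarrow> y > 0 \<Longrightarrow> x < 0"
  by (simp add: mult_less_0_iff)

lemma pos_aux: "(x::real) * y > 0 \<Longrightarrow> y > 0 \<Longrightarrow> x > 0"
  by (simp add: zero_less_mult_iff)

theorem mainTheorem13:
  fixes a2 b1 b2 c1 c2 k :: real
  assumes "a2 > 0" "b1 > 0" "b2 > 0" "c1 > 0" "c2 > 0" "k \<ge> 0"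
    and "c1 \<noteq> b1 * b2 / (k * a2 + c2)"
  shows "transcritical_bifurcation (model_field b1 c1 a2 b2 c2 k) (E3 a2 b2) (c1 * a2 / b2)"
proof -
  note pos = assms(1-6)
  define mu0 where "mu0 = c1 * a2 / b2"
  define D where "D = b1 * b2 - c1 * c2"
  define B0 where "B0 = D - c1 * a2 * k"
  have B0ne: "B0 \<noteq> 0"
  proof
    assume "B0 = 0"
    then have e: "b1 * b2 = c1 * (k * a2 + c2)" unfolding B0_def D_def by (simp add: algebra_simps)
    have "k * a2 + c2 > 0" using pos by (simp add: add_nonneg_pos)
    then have "c1 = b1 * b2 / (k * a2 + c2)" using e by (simp add: field_simps)
    with assms(7) show False by simp
  qed
  define sg where "sg = sgn B0"
  have sg2: "sg * sg = 1" using B0ne by (simp add: sg_def sgn_if)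
  have sgB: "sg * \<bar>B0\<bar> = B0" by (simp add: sg_def sgn_if)
  define Bf where "Bf = (\<lambda>mu. D - b2 * k * mu)"
  define arg where "arg = (\<lambda>mu. Bf mu * Bf mu + 4 * (k * D) * (b2 * (mu - mu0)))"
  define Den where "Den = (\<lambda>mu. Bf mu + sg * sqrt (arg mu))"
  define W where "W = (\<lambda>mu. 2 * b2 / Den mu)"
  define ug where "ug = (\<lambda>mu. (mu - mu0) * W mu)"
  define vg where "vg = (\<lambda>mu. (mu - b1 * ug mu) / c1)"
  define F where "F = model_field b1 c1 a2 b2 c2 k"
  define \<beta> where "\<beta> = (\<lambda>mu::real. E3 a2 b2)"
  define \<gamma> where "\<gamma> = (\<lambda>mu. ug mu *\<^sub>R axis 1 (1::real) + vg mu *\<^sub>R axis 2 1 :: real^2)"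
  have g1: "\<gamma> mu $ 1 = ug mu" and g2: "\<gamma> mu $ 2 = vg mu" for mu
    by (simp_all add: \<gamma>_def axis_def)
  have E31: "E3 a2 b2 $ 1 = 0" and E32: "E3 a2 b2 $ 2 = a2 / b2" by (simp_all add: E3_def)
  have Bf0: "Bf mu0 = B0" unfolding Bf_def B0_def mu0_def using pos by (simp add: field_simps)
  have arg0: "arg mu0 = B0 * B0" by (simp add: arg_def Bf0)
  have Den0: "Den mu0 = 2 * B0" unfolding Den_def Bf0 arg0 using sgB by simp
  have W0: "W mu0 = b2 / B0" by (simp add: W_def Den0)
  have W0ne: "W mu0 \<noteq> 0" using W0 B0ne pos by simp
  have ug0: "ug mu0 = 0" by (simp add: ug_def)
  have vg0: "vg mu0 = a2 / b2" using pos by (simp add: vg_def ug0, simp add: mu0_def)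
  have contDen: "isCont Den mu" for mu unfolding Den_def arg_def Bf_def by (intro continuous_intros)
  have contW: "isCont W mu" if "Den mu \<noteq> 0" for mu unfolding W_def using that by (intro continuous_intros contDen) auto
  have contug: "isCont ug mu" if "Den mu \<noteq> 0" for mu unfolding ug_def using that by (intro continuous_intros contW)
  have contvg: "isCont vg mu" if "Den mu \<noteq> 0" for mu unfolding vg_def using that pos by (intro continuous_intros contug) auto
  have contg: "isCont \<gamma> mu" if "Den mu \<noteq> 0" for mu unfolding \<gamma>_def using that by (intro continuous_intros contug contvg)

  define t where "t = min (1/2) (\<bar>B0\<bar> / (6 * (\<bar>D\<bar> + 1)))"
  have t0: "t > 0" using B0ne by (simp add: t_def)
  have t1: "t \<le> 1/2" unfolding t_def by (rule min.cobounded1)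
  have tD: "3 * t * \<bar>D\<bar> < \<bar>B0\<bar>"
  proof -
    have "t \<le> \<bar>B0\<bar> / (6 * (\<bar>D\<bar> + 1))" by (simp add: t_def)
    then have "3 * t * \<bar>D\<bar> \<le> 3 * (\<bar>B0\<bar> / (6 * (\<bar>D\<bar> + 1))) * \<bar>D\<bar>"
      by (intro mult_right_mono mult_left_mono) auto
    also have "\<dots> = \<bar>B0\<bar> * (\<bar>D\<bar> / (2 * (\<bar>D\<bar> + 1)))" by (simp add: field_simps)
    also have "\<dots> < \<bar>B0\<bar> * 1" using B0ne by (intro mult_strict_left_mono) (auto simp: field_simps)
    finally show ?thesis by simp
  qed
  define r0 where "r0 = min (t / (k + 1)) (min (a2 / (2 * b2)) (a2 / (4 * b1)))"
  have r0: "r0 > 0" using t0 pos by (simp add: r0_def)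
  have kw: "\<bar>k * w\<bar> \<le> t" if "\<bar>w\<bar> < r0" for w
  proof -
    have "\<bar>k * w\<bar> = k * \<bar>w\<bar>" using pos by (simp add: abs_mult)
    also have "\<dots> \<le> k * (t / (k + 1))" using that pos by (intro mult_left_mono) (auto simp: r0_def)
    also have "\<dots> \<le> t" using pos t0 by (simp add: field_simps)
    finally show ?thesis .
  qed
  have kw1: "1 + k * w \<ge> 1/2" if "\<bar>w\<bar> < r0" for w using kw[OF that] t1 by linarith
  have bw: "b1 * \<bar>w\<bar> < a2 / 4" if "\<bar>w\<bar> < r0" for w
  proof -
    have "b1 * \<bar>w\<bar> < b1 * (a2 / (4 * b1))" using that pos by (intro mult_strict_left_mono) (auto simp: r0_def)
    then show ?thesis using pos by simp
  qed
  have bz: "b2 * z > a2 / 2" if "\<bar>z - a2 / b2\<bar> < r0" for z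
  proof -
    have "z > a2 / b2 - a2 / (2 * b2)" using that by (auto simp: r0_def)
    then have "z > a2 / (2 * b2)" by (simp add: field_simps)
    then have "a2 < z * (2 * b2)" using pos by (simp add: divide_less_eq)
    then show ?thesis by (simp add: algebra_simps)
  qed
  define U where "U = ball (E3 a2 b2) r0"
  have openU: "open U" by (simp add: U_def)
  have E3U: "E3 a2 b2 \<in> U" using r0 by (simp add: U_def)
  have Ubnd: "\<bar>x$1\<bar> < r0 \<and> \<bar>x$2 - a2 / b2\<bar> < r0" if "x \<in> U" for x
  proof -
    have n: "norm (E3 a2 b2 - x) < r0" using that by (simp add: U_def dist_norm)
    have "\<bar>(E3 a2 b2 - x)$1\<bar> \<le> norm (E3 a2 b2 - x)" "\<bar>(E3 a2 b2 - x)$2\<bar> \<le> norm (E3 a2 b2 - x)"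
      by (rule component_le_norm_cart)+
    then show ?thesis using n by (auto simp: E31 E32)
  qed
  have inU: "x \<in> U" if "\<bar>x$1\<bar> < r0 / 2" "\<bar>x$2 - a2 / b2\<bar> < r0 / 2" for x
  proof -
    have "norm (E3 a2 b2 - x) \<le> (\<Sum>i\<in>UNIV. \<bar>(E3 a2 b2 - x)$i\<bar>)" by (rule norm_le_l1_cart)
    also have "\<dots> = \<bar>x$1\<bar> + \<bar>x$2 - a2 / b2\<bar>" by (simp add: sum_2 E31 E32 abs_minus_commute)
    finally show ?thesis using that by (simp add: U_def dist_norm)
  qed
  define H where "H = (\<lambda>w. D * w + c1 * a2 / (1 + k * w))"
  have qb: "\<bar>(1 + k * w1) * (1 + k * w2) - 1\<bar> \<le> 3 * t" if "\<bar>w1\<bar> < r0" "\<bar>w2\<bar> < r0" for w1 w2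
  proof -
    have "\<bar>(1 + k * w1) * (1 + k * w2) - 1\<bar> = \<bar>k * w1 + k * w2 + (k * w1) * (k * w2)\<bar>" by (simp add: algebra_simps)
    also have "\<dots> \<le> \<bar>k * w1\<bar> + \<bar>k * w2\<bar> + \<bar>k * w1\<bar> * \<bar>k * w2\<bar>" by (simp add: abs_mult abs_triangle_ineq order_trans[OF abs_triangle_ineq])
    also have "\<dots> \<le> t + t + t * t" using kw[OF that(1)] kw[OF that(2)] by (intro add_mono mult_mono) auto
    also have "\<dots> \<le> 3 * t"
    proof -
      have "t * t \<le> t * 1" using t0 t1 by (intro mult_left_mono) auto
      then show ?thesis by linarith
    qed
    finally show ?thesis .
  qed
  have Hinj: "w1 = w2" if "\<bar>w1\<bar> < r0" "\<bar>w2\<bar> < r0" "H w1 = H w2" for w1 w2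
  proof -
    define q where "q = (1 + k * w1) * (1 + k * w2)"
    have p1: "1 + k * w1 > 0" "1 + k * w2 > 0" using kw1[OF that(1)] kw1[OF that(2)] by linarith+
    have q0: "q > 0" using p1 by (simp add: q_def)
    have q1: "\<bar>q - 1\<bar> \<le> 3 * t" unfolding q_def by (rule qb[OF that(1,2)])
    have sl: "(D - c1 * a2 * k / q) * B0 > 0" by (rule sign_lem[OF B0_def q0 q1 tD])
    have r: "c1*a2/(1+k*w1) - c1*a2/(1+k*w2) = -(w1 - w2) * (c1*a2*k/((1 + k * w1) * (1 + k * w2)))"
      using p1 by (simp add: field_simps)
    have "H w1 - H w2 = (w1 - w2) * (D - c1 * a2 * k / q)"
      unfolding H_def q_def by (rule lin_aux[OF r])
    then have "(w1 - w2) * (D - c1 * a2 * k / q) = 0" using that(3) by simp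
    then show ?thesis using sl by auto
  qed
  have Feq: "F mu x = 0 \<longleftrightarrow> (x$1 * (mu - b1 * x$1 - c1 * x$2) = 0 \<and>
      x$2 * (a2 / (1 + k * x$1) - b2 * x$2 - c2 * x$1) = 0)" for mu x
    unfolding F_def model_field_def by (simp add: vec_eq_iff forall_2 algebra_simps power2_eq_square)

  have Heq: "b2 * mu = H w" if "mu = b1 * w + c1 * z" "a2 / (1 + k * w) = b2 * z + c2 * w" for mu w z
  proof -
    have "b2 * mu = b1 * b2 * w + c1 * (b2 * z)" using that(1) by (simp add: algebra_simps)
    also have "b2 * z = a2 / (1 + k * w) - c2 * w" using that(2) by simp
    finally show ?thesis unfolding H_def D_def by (simp add: algebra_simps)
  qed
  have b2mu0: "b2 * mu0 = c1 * a2" using pos by (simp add: mu0_def)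
  have Den0ne: "Den mu0 \<noteq> 0" using Den0 B0ne by simp
  have ev1: "eventually (\<lambda>mu. arg mu > 0) (nhds mu0)"
  proof -
    have "isCont arg mu0" unfolding arg_def Bf_def by (intro continuous_intros)
    then have "(arg \<longlongrightarrow> arg mu0) (nhds mu0)" by (simp add: isCont_def tendsto_at_iff_tendsto_nhds)
    moreover have "arg mu0 > 0" using arg0 B0ne by (metis not_real_square_gt_zero)
    ultimately show ?thesis by (rule order_tendstoD(1))
  qed
  have "(Den \<longlongrightarrow> Den mu0) (nhds mu0)" using contDen[of mu0] by (simp add: isCont_def tendsto_at_iff_tendsto_nhds)
  then have ev2: "eventually (\<lambda>mu. dist (Den mu) (Den mu0) < \<bar>B0\<bar>) (nhds mu0)"
    using B0ne by (intro tendstoD) auto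
  have "(ug \<longlongrightarrow> ug mu0) (nhds mu0)" using contug[OF Den0ne] by (simp add: isCont_def tendsto_at_iff_tendsto_nhds)
  then have ev3: "eventually (\<lambda>mu. dist (ug mu) (ug mu0) < r0 / 2) (nhds mu0)"
    using r0 by (intro tendstoD) auto
  have "(vg \<longlongrightarrow> vg mu0) (nhds mu0)" using contvg[OF Den0ne] by (simp add: isCont_def tendsto_at_iff_tendsto_nhds)
  then have ev4: "eventually (\<lambda>mu. dist (vg mu) (vg mu0) < r0 / 2) (nhds mu0)"
    using r0 by (intro tendstoD) auto
  have "eventually (\<lambda>mu. arg mu > 0 \<and> dist (Den mu) (Den mu0) < \<bar>B0\<bar> \<and>
      dist (ug mu) (ug mu0) < r0 / 2 \<and> dist (vg mu) (vg mu0) < r0 / 2) (nhds mu0)"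
    using ev1 ev2 ev3 ev4 by (intro eventually_conj)
  then obtain \<delta> where \<delta>: "\<delta> > 0" and H\<delta>: "\<And>mu. dist mu mu0 < \<delta> \<Longrightarrow> arg mu > 0 \<and> dist (Den mu) (Den mu0) < \<bar>B0\<bar> \<and>
      dist (ug mu) (ug mu0) < r0 / 2 \<and> dist (vg mu) (vg mu0) < r0 / 2"
    unfolding eventually_nhds_metric by blast
  define I where "I = {mu0 - \<delta> <..< mu0 + \<delta>}"
  have props: "arg mu > 0 \<and> Den mu \<noteq> 0 \<and> \<bar>ug mu\<bar> < r0 / 2 \<and> \<bar>vg mu - a2 / b2\<bar> < r0 / 2" if "mu \<in> I" for mu
  proof -
    have "dist mu mu0 < \<delta>" using that by (auto simp: I_def dist_real_def)
    note h = H\<delta>[OF this]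
    have "Den mu \<noteq> 0"
    proof
      assume "Den mu = 0"
      then have "dist (Den mu) (Den mu0) = 2 * \<bar>B0\<bar>" by (simp add: Den0 dist_real_def)
      then show False using h B0ne by simp
    qed
    then show ?thesis using h by (simp add: ug0 vg0 dist_real_def)
  qed
  have Q: "k * D * ug mu * ug mu + Bf mu * ug mu - b2 * (mu - mu0) = 0" if "mu \<in> I" for mu
  proof -
    from props[OF that] have a: "arg mu > 0" and d: "Den mu \<noteq> 0" by auto
    have d': "Bf mu + sg * sqrt (arg mu) \<noteq> 0" using d by (simp add: Den_def)
    have e1: "ug mu * (Bf mu + sg * sqrt (arg mu)) = 2 * (b2 * (mu - mu0))"
      using d' unfolding ug_def W_def Den_def by (simp add: field_simps)
    have "sqrt (arg mu) * sqrt (arg mu) = arg mu" using a by simp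
    also have "\<dots> = Bf mu * Bf mu + 4 * (k * D) * (b2 * (mu - mu0))" by (simp add: arg_def)
    finally have e2: "sqrt (arg mu) * sqrt (arg mu) = Bf mu * Bf mu + 4 * (k * D) * (b2 * (mu - mu0))" .
    show ?thesis using root_lem[OF sg2 e2 e1 d'] by simp
  qed
  have geq: "1 + k * ug mu > 0 \<and> mu = b1 * ug mu + c1 * vg mu \<and> a2 / (1 + k * ug mu) = b2 * vg mu + c2 * ug mu"
    if "mu \<in> I" for mu
  proof -
    define u where "u = ug mu"
    define v where "v = vg mu"
    have ur: "\<bar>u\<bar> < r0" using props[OF that] r0 by (simp add: u_def)
    have pu: "1 + k * u > 0" using kw1[OF ur] by linarith
    have e1: "mu = b1 * u + c1 * v" using pos by (simp add: u_def v_def vg_def)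
    have "(1 + k * u) * (b2 * mu - D * u) = b2 * mu0 - (k * D * u * u + Bf mu * u - b2 * (mu - mu0))"
      unfolding Bf_def by (simp add: algebra_simps)
    then have Y: "(1 + k * u) * (b2 * mu - D * u) = c1 * a2" using Q[OF that] b2mu0 by (simp add: u_def)
    have X: "c1 * (b2 * v + c2 * u) = b2 * mu - D * u" using pos by (simp add: v_def vg_def u_def D_def field_simps)
    have "c1 * ((1 + k * u) * (b2 * v + c2 * u)) = (1 + k * u) * (c1 * (b2 * v + c2 * u))" by (simp add: algebra_simps)
    also have "\<dots> = c1 * a2" using X Y by simp
    finally have "c1 * ((1 + k * u) * (b2 * v + c2 * u)) = c1 * a2" .
    then have "(1 + k * u) * (b2 * v + c2 * u) = a2" using pos by simp
    then have e2: "a2 / (1 + k * u) = b2 * v + c2 * u" using pu by (simp add: field_simps)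
    show ?thesis unfolding u_def[symmetric] v_def[symmetric] using pu e1 e2 by blast
  qed

  have gU: "\<gamma> mu \<in> U" if "mu \<in> I" for mu
    using props[OF that] by (intro inU) (simp_all add: g1 g2)
  have Fg0: "F mu (\<gamma> mu) = 0" if "mu \<in> I" for mu
    using geq[OF that] unfolding Feq g1 g2 by simp
  have Fb0: "F mu (\<beta> mu) = 0" for mu
    unfolding Feq \<beta>_def E31 E32 using pos by simp
  have gne: "\<beta> mu \<noteq> \<gamma> mu" if "mu \<in> I" "mu \<noteq> mu0" for mu
  proof
    assume "\<beta> mu = \<gamma> mu"
    then have "ug mu = 0" using g1[of mu] E31 unfolding \<beta>_def by metis
    moreover have "Den mu \<noteq> 0" using props[OF that(1)] by simp
    ultimately show False using that(2) pos by (simp add: ug_def W_def)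
  qed
  have uniq: "F mu x = 0 \<longleftrightarrow> x = \<beta> mu \<or> x = \<gamma> mu" if "mu \<in> I" "x \<in> U" for mu x
  proof
    assume F0: "F mu x = 0"
    have xb: "\<bar>x$1\<bar> < r0" "\<bar>x$2 - a2 / b2\<bar> < r0" using Ubnd[OF that(2)] by auto
    have "b2 * x$2 > a2 / 2" using bz[OF xb(2)] .
    then have x2: "x$2 \<noteq> 0" using pos by auto
    have f1: "x$1 * (mu - b1 * x$1 - c1 * x$2) = 0" and f2: "a2 / (1 + k * x$1) - b2 * x$2 - c2 * x$1 = 0"
      using F0 x2 unfolding Feq by auto
    show "x = \<beta> mu \<or> x = \<gamma> mu"
    proof (cases "x$1 = 0")
      case True
      then have "x$2 = a2 / b2" using f2 pos by (simp add: field_simps)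
      then have "x = \<beta> mu" using True by (simp add: \<beta>_def vec_eq_iff forall_2 E31 E32)
      then show ?thesis ..
    next
      case False
      then have m: "mu = b1 * x$1 + c1 * x$2" using f1 by simp
      have "b2 * mu = H (x$1)" using Heq[OF m] f2 by simp
      moreover have "b2 * mu = H (ug mu)" using geq[OF that(1)] Heq by blast
      moreover have "\<bar>ug mu\<bar> < r0" using props[OF that(1)] r0 by simp
      ultimately have u: "x$1 = ug mu" using Hinj xb(1) by metis
      have "x$2 = vg mu" using m pos unfolding vg_def u[symmetric] by (simp add: field_simps)
      then have "x = \<gamma> mu" using u by (simp add: vec_eq_iff forall_2 g1 g2)
      then show ?thesis ..
    qed
  next
    assume "x = \<beta> mu \<or> x = \<gamma> mu"
    then show "F mu x = 0" using Fb0 Fg0[OF that(1)] by auto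
  qed
  have dug: "(ug has_field_derivative W mu0) (at mu0)"
    unfolding DERIV_caratheodory_within
    by (intro exI[of _ W] conjI allI) (simp_all add: ug_def contW[OF Den0ne] mult.commute)
  have dvg: "(vg has_field_derivative (1 - b1 * W mu0) / c1) (at mu0)"
    unfolding vg_def by (rule derivative_eq_intros dug refl | simp)+ (use pos in \<open>simp_all add: field_simps\<close>)
  define dg where "dg = (W mu0 *\<^sub>R axis 1 (1::real) + ((1 - b1 * W mu0) / c1) *\<^sub>R axis 2 1 :: real^2)"
  have dgam: "(\<gamma> has_vector_derivative dg) (at mu0)"
    unfolding \<gamma>_def dg_def
    using has_vector_derivative_add[OF has_vector_derivative_scaleR[OF dug has_vector_derivative_const]
        has_vector_derivative_scaleR[OF dvg has_vector_derivative_const]] by simp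
  have dgne: "0 \<noteq> dg"
  proof
    assume "0 = dg"
    then have "dg $ 1 = 0" by simp
    then show False using W0ne by (simp add: dg_def axis_def)
  qed
  have dbet: "(\<beta> has_vector_derivative 0) (at mu0)" unfolding \<beta>_def by simp
  have ctsb: "continuous_on I \<beta>" unfolding \<beta>_def by simp
  have ctsg: "continuous_on I \<gamma>"
    using props by (intro continuous_at_imp_continuous_on ballI contg) auto
  have b0: "\<beta> mu0 = E3 a2 b2" by (simp add: \<beta>_def)
  have gm0: "\<gamma> mu0 = E3 a2 b2" by (simp add: vec_eq_iff forall_2 g1 g2 E31 E32 ug0 vg0)
  have Fb: "(F mu has_derivative (\<lambda>h. Jac b1 c1 a2 b2 c2 k mu 0 (a2 / b2) *v h)) (at (\<beta> mu))" for mu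
    using field_deriv[of k "E3 a2 b2" b1 c1 a2 b2 c2 mu] by (simp add: F_def \<beta>_def E31 E32)
  have Jb: "Jac b1 c1 a2 b2 c2 k mu 0 (a2 / b2) $1$1 = mu - mu0"
    "Jac b1 c1 a2 b2 c2 k mu 0 (a2 / b2) $1$2 = 0"
    "Jac b1 c1 a2 b2 c2 k mu 0 (a2 / b2) $2$2 = - a2" for mu
    using pos by (simp_all add: Jac_def mu0_def)
  have bst: "lin_stable F mu (\<beta> mu)" if "mu < mu0" for mu
    unfolding lin_stable_def
  proof (intro exI conjI)
    show "(F mu has_derivative (\<lambda>h. Jac b1 c1 a2 b2 c2 k mu 0 (a2 / b2) *v h)) (at (\<beta> mu))" by (rule Fb)
    show "\<forall>l. is_eigenvalue (Jac b1 c1 a2 b2 c2 k mu 0 (a2 / b2)) l \<longrightarrow> Re l < 0"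
      using that pos by (intro stable2) (simp_all add: Jb mult_neg_pos)
  qed
  have bun: "lin_unstable F mu (\<beta> mu)" if "mu > mu0" for mu
    unfolding lin_unstable_def
  proof (rule exI[of _ "Jac b1 c1 a2 b2 c2 k mu 0 (a2 / b2)"], rule conjI)
    show "(F mu has_derivative (\<lambda>h. Jac b1 c1 a2 b2 c2 k mu 0 (a2 / b2) *v h)) (at (\<beta> mu))" by (rule Fb)
    show "\<exists>l. is_eigenvalue (Jac b1 c1 a2 b2 c2 k mu 0 (a2 / b2)) l \<and> Re l > 0"
      using that by (intro unstable_tri) (simp_all add: Jb)
  qed
  have gstab: "(mu < mu0 \<longrightarrow> lin_unstable F mu (\<gamma> mu)) \<and> (mu > mu0 \<longrightarrow> lin_stable F mu (\<gamma> mu))"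
    if "mu \<in> I" for mu
  proof -
    define u where "u = ug mu"
    define v where "v = vg mu"
    define J where "J = Jac b1 c1 a2 b2 c2 k mu u v"
    have ur: "\<bar>u\<bar> < r0" using props[OF that] r0 by (simp add: u_def)
    have vr: "\<bar>v - a2 / b2\<bar> < r0" using props[OF that] r0 by (simp add: v_def)
    have pu: "1 + k * u > 0" and e1: "mu = b1 * u + c1 * v" and e2: "a2 / (1 + k * u) = b2 * v + c2 * u"
      using geq[OF that] by (simp_all add: u_def v_def)
    have Fd: "(F mu has_derivative (\<lambda>h. J *v h)) (at (\<gamma> mu))"
      using field_deriv[of k "\<gamma> mu" b1 c1 a2 b2 c2 mu] pu by (simp add: F_def J_def g1 g2 u_def v_def)
    have J11: "J$1$1 = - b1 * u" using e1 by (simp add: J_def Jac_def)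
    have J22: "J$2$2 = - b2 * v" using e2 by (simp add: J_def Jac_def)
    have J12: "J$1$2 = - c1 * u" by (simp add: J_def Jac_def)
    have J21: "J$2$1 = - (a2 * k * v / (1 + k * u)^2) - c2 * v" by (simp add: J_def Jac_def)
    have vpos: "b2 * v > a2 / 2" using bz[OF vr] .
    have "- \<bar>u\<bar> \<le> u" by linarith
    then have "b1 * (- \<bar>u\<bar>) \<le> b1 * u" using pos by (intro mult_left_mono) auto
    then have tr: "J$1$1 + J$2$2 < 0" using bw[OF ur] vpos pos unfolding J11 J22 by simp
    define G where "G = D - c1 * a2 * k / ((1 + k * u) * (1 + k * u))"
    define E where "E = D - c1 * a2 * k / (1 + k * u)"
    have det: "J$1$1 * J$2$2 - J$1$2 * J$2$1 = u * v * G"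
      unfolding J11 J22 J12 J21 G_def D_def using pu by (simp add: field_simps power2_eq_square)
    have "b2 * mu = H u" using Heq[OF e1 e2] .
    then have uE: "u * E = b2 * (mu - mu0)"
      unfolding E_def H_def using pu b2mu0 by (simp add: field_simps)
    have GB: "G * B0 > 0" unfolding G_def
      by (rule sign_lem[OF B0_def _ qb[OF ur ur] tD]) (use pu in simp)
    have EB: "E * B0 > 0" unfolding E_def
    proof (rule sign_lem[OF B0_def])
      show "1 + k * u > 0" by (rule pu)
      show "\<bar>1 + k * u - 1\<bar> \<le> 3 * t" using kw[OF ur] t0 by simp
    qed (rule tD)
    have vp: "v > 0"
    proof (rule ccontr)
      assume "\<not> v > 0"
      then have "b2 * v \<le> 0" using pos by (simp add: mult_nonneg_nonpos)
      then show False using vpos pos by linarith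
    qed
    have key: "(J$1$1 * J$2$2 - J$1$2 * J$2$1) * (E * B0) = (v * b2 * (G * B0)) * (mu - mu0)"
    proof -
      have "(J$1$1 * J$2$2 - J$1$2 * J$2$1) * (E * B0) = v * G * B0 * (u * E)" unfolding det by (simp add: algebra_simps)
      also have "\<dots> = (v * b2 * (G * B0)) * (mu - mu0)" unfolding uE by (simp add: algebra_simps)
      finally show ?thesis .
    qed
    have cpos: "v * b2 * (G * B0) > 0" using vp pos GB by simp
    show ?thesis
    proof (intro conjI impI)
      assume "mu < mu0"
      then have "(v * b2 * (G * B0)) * (mu - mu0) < 0" using cpos by (simp add: mult_pos_neg)
      then have "J$1$1 * J$2$2 - J$1$2 * J$2$1 < 0" using key EB neg_aux by metis
      then show "lin_unstable F mu (\<gamma> mu)" unfolding lin_unstable_def using Fd unstable_det by blast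
    next
      assume "mu > mu0"
      then have "(v * b2 * (G * B0)) * (mu - mu0) > 0" using cpos by simp
      then have "J$1$1 * J$2$2 - J$1$2 * J$2$1 > 0" using key EB pos_aux by metis
      then show "lin_stable F mu (\<gamma> mu)" unfolding lin_stable_def using Fd stable2 tr by blast
    qed
  qed
  have I1: "{mu0 - \<delta> <..< mu0} \<subseteq> I" and I2: "{mu0 <..< mu0 + \<delta>} \<subseteq> I" by (auto simp: I_def)
  have main: "transcritical_bifurcation F (E3 a2 b2) mu0"
    unfolding transcritical_bifurcation_def
  proof (intro exI conjI)
    show "\<delta> > 0" by (rule \<delta>)
    show "open U" by (rule openU)
    show "E3 a2 b2 \<in> U" by (rule E3U)
    show "\<beta> mu0 = E3 a2 b2" by (rule b0)
    show "\<gamma> mu0 = E3 a2 b2" by (rule gm0)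
    show "continuous_on {mu0 - \<delta> <..< mu0 + \<delta>} \<beta>" using ctsb by (simp add: I_def)
    show "continuous_on {mu0 - \<delta> <..< mu0 + \<delta>} \<gamma>" using ctsg by (simp add: I_def)
    show "(\<beta> has_vector_derivative 0) (at mu0)" by (rule dbet)
    show "(\<gamma> has_vector_derivative dg) (at mu0)" by (rule dgam)
    show "0 \<noteq> dg" by (rule dgne)
    show "\<forall>mu\<in>{mu0 - \<delta> <..< mu0 + \<delta>}. \<forall>x\<in>U. (F mu x = 0) = (x = \<beta> mu \<or> x = \<gamma> mu)"
      using uniq unfolding I_def by blast
    show "\<forall>mu\<in>{mu0 - \<delta> <..< mu0 + \<delta>}. mu \<noteq> mu0 \<longrightarrow> \<beta> mu \<noteq> \<gamma> mu \<and> \<beta> mu \<in> U \<and> \<gamma> mu \<in> U"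
      using gne gU E3U unfolding I_def by (simp add: \<beta>_def)
    show "\<forall>mu\<in>{mu0 - \<delta><..<mu0}. lin_stable F mu (\<beta> mu) \<and> lin_unstable F mu (\<gamma> mu)"
      using bst gstab I1 by auto
    show "\<forall>mu\<in>{mu0<..<mu0 + \<delta>}. lin_unstable F mu (\<beta> mu) \<and> lin_stable F mu (\<gamma> mu)"
      using bun gstab I2 by auto
  qed
  then show ?thesis by (simp add: F_def mu0_def)
qed

end
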